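(* Let $A$ and $G$ be cubic graphs. Then every graph $G\circ A^-$ has girth at least the girth $g(A)$ of $A$.
   Context: Let $G$ and $A$ be $3$-regular (simple) graphs, let $a$ be a vertex of $A$ and $A^-=A-a$. A graph $G\circ A^-$ is any graph obtained by replacing each vertex $v$ of $G$ by a copy $A^-_v$ of $A^-$ and, for each edge $uv$ of $G$, adding an edge joining a vertex of degree $2$ of $A^-_u$ to a vertex of degree $2$ of $A^-_v$, so that each degree-$2$ vertex of each copy is incident with exactly one added edge (the choices of $a$ and of these edges are arbitrary). *)

theory Defs
  imports Main "HOL-Library.Extended_Nat"
begin

definition simple_graph :: "'a set \<Rightarrow> ('a \<Rightarrow> 'a \<Rightarrow> bool) \<Rightarrow> bool" where
  "simple_graph V E \<longleftrightarrow> finite V \<and> (\<forall>x y. E x y \<longrightarrow> x \<in> V \<and> y \<in> V)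
     \<and> (\<forall>x y. E x y \<longrightarrow> E y x) \<and> (\<forall>x. \<not> E x x)"

definition degree :: "'a set \<Rightarrow> ('a \<Rightarrow> 'a \<Rightarrow> bool) \<Rightarrow> 'a \<Rightarrow> nat" where
  "degree V E x = card {y \<in> V. E x y}"

definition cubic :: "'a set \<Rightarrow> ('a \<Rightarrow> 'a \<Rightarrow> bool) \<Rightarrow> bool" where
  "cubic V E \<longleftrightarrow> simple_graph V E \<and> (\<forall>x\<in>V. degree V E x = 3)"

definition is_cycle :: "'a set \<Rightarrow> ('a \<Rightarrow> 'a \<Rightarrow> bool) \<Rightarrow> 'a list \<Rightarrow> bool" where
  "is_cycle V E cs \<longleftrightarrow> 3 \<le> length cs \<and> distinct cs \<and> set cs \<subseteq> V
     \<and> (\<forall>i < length cs. E (cs ! i) (cs ! ((i + 1) mod length cs)))"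

text \<open>Girth: length of a shortest cycle (infinity if there is none).\<close>
definition girth :: "'a set \<Rightarrow> ('a \<Rightarrow> 'a \<Rightarrow> bool) \<Rightarrow> enat" where
  "girth V E = (INF cs \<in> {cs. is_cycle V E cs}. enat (length cs))"

text \<open>The construction G o A^-: the vertex set is VG \<times> (VA - {a}), vertex (v,x) being
  the copy of x in A^-_v. F is the relation of added edges.\<close>
definition circ_matching ::
  "'a set \<Rightarrow> ('a \<Rightarrow> 'a \<Rightarrow> bool) \<Rightarrow> 'b set \<Rightarrow> ('b \<Rightarrow> 'b \<Rightarrow> bool) \<Rightarrow> 'b
    \<Rightarrow> ('a \<times> 'b \<Rightarrow> 'a \<times> 'b \<Rightarrow> bool) \<Rightarrow> bool" where
  "circ_matching VG EG VA EA a F \<longleftrightarrow>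
     (\<forall>p q. F p q \<longrightarrow> F q p)
   \<and> (\<forall>u x v y. F (u, x) (v, y) \<longrightarrow>
        EG u v \<and> x \<in> VA - {a} \<and> y \<in> VA - {a}
        \<and> degree (VA - {a}) EA x = 2 \<and> degree (VA - {a}) EA y = 2)
   \<and> (\<forall>u v. EG u v \<longrightarrow> (\<exists>!xy. F (u, fst xy) (v, snd xy)))
   \<and> (\<forall>u\<in>VG. \<forall>x\<in>VA - {a}. degree (VA - {a}) EA x = 2 \<longrightarrow> (\<exists>!q. F (u, x) q))"

definition circ_edges ::
  "('b \<Rightarrow> 'b \<Rightarrow> bool) \<Rightarrow> ('a \<times> 'b \<Rightarrow> 'a \<times> 'b \<Rightarrow> bool) \<Rightarrow> 'a \<times> 'b \<Rightarrow> 'a \<times> 'b \<Rightarrow> bool" where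
  "circ_edges EA F p q \<longleftrightarrow> (fst p = fst q \<and> EA (snd p) (snd q)) \<or> F p q"

end

theory Submission
  imports Defs
begin

lemma F_props:
  assumes "cubic VG EG" "circ_matching VG EG VA EA a F" "F p q"
  shows "fst p \<noteq> fst q" "snd p \<in> VA - {a}" "degree (VA - {a}) EA (snd p) = 2"
    "fst p \<in> VG" "F q p"
proof -
  obtain u x where p: "p = (u, x)" by (cases p)
  obtain v y where q: "q = (v, y)" by (cases q)
  have sg: "simple_graph VG EG" using assms(1) unfolding cubic_def by blast
  have h: "EG u v \<and> x \<in> VA - {a} \<and> y \<in> VA - {a}
        \<and> degree (VA - {a}) EA x = 2 \<and> degree (VA - {a}) EA y = 2"
    using assms(2,3) unfolding circ_matching_def p q by blast
  show "fst p \<noteq> fst q" using h sg unfolding simple_graph_def p q by auto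
  show "snd p \<in> VA - {a}" "degree (VA - {a}) EA (snd p) = 2" using h p by auto
  show "fst p \<in> VG" using h sg unfolding simple_graph_def p by auto
  show "F q p" using assms(2,3) unfolding circ_matching_def by blast
qed

lemma nbr_a:
  assumes "cubic VA EA" "a \<in> VA" "x \<in> VA - {a}" "degree (VA - {a}) EA x = 2"
  shows "EA x a"
proof (rule ccontr)
  assume "\<not> EA x a"
  then have "{y \<in> VA. EA x y} = {y \<in> VA - {a}. EA x y}" by auto
  then have "degree VA EA x = 2" using assms(4) unfolding degree_def by simp
  moreover have "degree VA EA x = 3" using assms(1,3) unfolding cubic_def by auto
  ultimately show False by simp
qed

lemma rotate_cycle:
  assumes "is_cycle V E cs"
  shows "is_cycle V E (rotate k cs)"
proof -
  define n where "n = length cs"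
  have n: "n \<ge> 3" using assms unfolding is_cycle_def n_def by auto
  have E: "\<And>i. i < n \<Longrightarrow> E (cs ! i) (cs ! ((i + 1) mod n))"
    using assms unfolding is_cycle_def n_def by auto
  have len: "length (rotate k cs) = n" unfolding n_def by simp
  show ?thesis unfolding is_cycle_def len
  proof (intro conjI allI impI)
    show "3 \<le> n" using n .
    show "distinct (rotate k cs)" using assms unfolding is_cycle_def by simp
    show "set (rotate k cs) \<subseteq> V" using assms unfolding is_cycle_def by simp
    fix i assume i': "i < n"
    define j where "j = (k + i) mod n"
    have jn: "j < n" unfolding j_def using n by simp
    have 1: "rotate k cs ! i = cs ! j" unfolding j_def n_def
      using i' n_def by (simp only: nth_rotate)
    have lt: "(i + 1) mod n < n" using n by simp
    have 2: "rotate k cs ! ((i + 1) mod n) = cs ! ((k + (i+1) mod n) mod n)"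
      using lt unfolding n_def by (simp only: nth_rotate)
    have a1: "(k + (i+1) mod n) mod n = (k + (i + 1)) mod n" by (rule mod_add_right_eq)
    have a2: "(j + 1) mod n = (k + i + 1) mod n" unfolding j_def by (rule mod_add_left_eq)
    have a3: "k + (i + 1) = k + i + 1" by simp
    have "rotate k cs ! ((i + 1) mod n) = cs ! ((j + 1) mod n)"
      using 2 a1 a2 a3 by simp
    then show "E (rotate k cs ! i) (rotate k cs ! ((i + 1) mod n))"
      using 1 E[OF jn] by simp
  qed
qed

lemma F_unique:
  assumes "circ_matching VG EG VA EA a F" "u \<in> VG" "x \<in> VA - {a}"
    "degree (VA - {a}) EA x = 2"
  shows "\<exists>!q. F (u, x) q"
proof -
  have "\<forall>u\<in>VG. \<forall>x\<in>VA - {a}. degree (VA - {a}) EA x = 2 \<longrightarrow> (\<exists>!q. F (u, x) q)"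
    using assms(1) unfolding circ_matching_def by (elim conjE)
  then show ?thesis using assms(2-4) by blast
qed

lemma seg_cycle:
  assumes G: "cubic VG EG" and A: "cubic VA EA" and aV: "a \<in> VA"
    and M: "circ_matching VG EG VA EA a F"
    and C: "is_cycle (VG \<times> (VA - {a})) (circ_edges EA F) cs"
    and last: "fst (cs ! (length cs - 1)) \<noteq> fst (cs ! 0)"
  shows "\<exists>D. is_cycle VA EA D \<and> length D \<le> length cs"
proof -
  define n where "n = length cs"
  have n3: "n \<ge> 3" using C unfolding is_cycle_def n_def by auto
  have dist: "distinct cs" using C unfolding is_cycle_def by auto
  have setc: "\<And>l. l < n \<Longrightarrow> cs ! l \<in> VG \<times> (VA - {a})"
    using C unfolding is_cycle_def n_def by auto
  have E: "\<And>i. i < n \<Longrightarrow> circ_edges EA F (cs ! i) (cs ! ((i + 1) mod n))"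
    using C unfolding is_cycle_def n_def by auto
  have same: "EA (snd p) (snd q)" if "circ_edges EA F p q" "fst p = fst q" for p q
    using that F_props(1)[OF G M] unfolding circ_edges_def by blast
  have diff: "F p q" if "circ_edges EA F p q" "fst p \<noteq> fst q" for p q
    using that unfolding circ_edges_def by blast
  define P where "P = (\<lambda>m. fst (cs ! m) \<noteq> fst (cs ! 0))"
  define m where "m = (LEAST m. P m)"
  have Pn: "P (n - 1)" using last unfolding P_def n_def by simp
  have mle: "m \<le> n - 1" unfolding m_def using Pn by (rule Least_le)
  have Pm: "P m" unfolding m_def using Pn by (rule LeastI)
  have below: "\<And>l. l < m \<Longrightarrow> fst (cs ! l) = fst (cs ! 0)"
  proof -
    fix l assume l: "l < m"
    have "\<not> P l" using not_less_Least[of l P] l unfolding m_def by blast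
    then show "fst (cs ! l) = fst (cs ! 0)" unfolding P_def by simp
  qed
  have Eg: "circ_edges EA F (cs ! i) (cs ! (i + 1))" if "i + 1 < n" for i
  proof -
    have "i < n" "(i + 1) mod n = i + 1" using that by simp_all
    then show ?thesis using E[of i] by simp
  qed
  have Ewrap: "circ_edges EA F (cs ! (n - 1)) (cs ! 0)"
  proof -
    have nl: "n - 1 < n" using n3 by simp
    have z: "(n - 1 + 1) mod n = 0" using n3 by simp
    show ?thesis using E[OF nl] unfolding z .
  qed
  have m0: "m \<noteq> 0"
  proof
    assume "m = 0" then show False using Pm unfolding P_def by simp
  qed
  have Flast: "F (cs ! (n - 1)) (cs ! 0)"
  proof -
    show ?thesis using diff[OF Ewrap] Pn unfolding P_def by simp
  qed
  have F0: "F (cs ! 0) (cs ! (n - 1))" using F_props(5)[OF G M Flast] .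
  have m2: "m \<ge> 2"
  proof (rule ccontr)
    assume "\<not> m \<ge> 2"
    then have m1: "m = 1" using m0 by simp
    have "circ_edges EA F (cs ! 0) (cs ! 1)" using Eg[of 0] n3 by simp
    then have "F (cs ! 0) (cs ! 1)" using diff Pm m1 n3 unfolding P_def by simp
    obtain u x where ux: "cs ! 0 = (u, x)" by (cases "cs ! 0")
    have "u \<in> VG" "x \<in> VA - {a}" "degree (VA - {a}) EA x = 2"
      using F_props(2,3,4)[OF G M F0] ux by auto
    then have "\<exists>!q. F (u, x) q" using F_unique[OF M] by blast
    moreover have "F (u, x) (cs ! 1)" "F (u, x) (cs ! (n - 1))"
      using \<open>F (cs ! 0) (cs ! 1)\<close> F0 ux by simp_all
    ultimately have eq: "cs ! 1 = cs ! (n - 1)" by blast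
    have "1 < length cs" "n - 1 < length cs" "1 \<noteq> n - 1" using n3 n_def by auto
    then show False using nth_eq_iff_index_eq[OF dist, of 1 "n - 1"] eq by simp
  qed
  define D where "D = a # map (\<lambda>l. snd (cs ! l)) [0..<m]"
  have lenD: "length D = m + 1" unfolding D_def by simp
  have sndin: "snd (cs ! l) \<in> VA - {a}" if "l < n" for l
  proof -
    have "cs ! l \<in> VG \<times> (VA - {a})" using setc[OF that] .
    then show ?thesis by (simp only: mem_Times_iff)
  qed
  have Dnth: "D ! i = snd (cs ! (i - 1))" if "0 < i" "i \<le> m" for i
  proof -
    have im: "i - 1 < m" using that by simp
    have "D ! i = map (\<lambda>l. snd (cs ! l)) [0..<m] ! (i - 1)"
      unfolding D_def using that(1) by (rule nth_Cons_pos)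
    also have "\<dots> = snd (cs ! ([0..<m] ! (i - 1)))" using im by (simp only: nth_map length_upt diff_zero)
    also have "[0..<m] ! (i - 1) = i - 1" using im by simp
    finally show ?thesis .
  qed
  have "is_cycle VA EA D" unfolding is_cycle_def
  proof (intro conjI allI impI)
    show "3 \<le> length D" using lenD m2 by simp
    have inj: "inj_on (\<lambda>l. snd (cs ! l)) {0..<m}"
    proof (rule inj_onI)
      fix l1 l2 assume l: "l1 \<in> {0..<m}" "l2 \<in> {0..<m}" "snd (cs ! l1) = snd (cs ! l2)"
      then have "fst (cs ! l1) = fst (cs ! l2)" using below[of l1] below[of l2] by simp
      then have "cs ! l1 = cs ! l2" using l(3) by (simp add: prod_eq_iff)
      moreover have "l1 < length cs" "l2 < length cs" using l mle n3 n_def by auto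
      ultimately show "l1 = l2" using nth_eq_iff_index_eq[OF dist, of l1 l2] by simp
    qed
    have "a \<notin> set (map (\<lambda>l. snd (cs ! l)) [0..<m])"
    proof
      assume "a \<in> set (map (\<lambda>l. snd (cs ! l)) [0..<m])"
      then obtain l where l: "l < m" "a = snd (cs ! l)" by auto
      have "l < n" using l(1) mle n3 by simp
      then show False using sndin[of l] l(2) by simp
    qed
    then show "distinct D" unfolding D_def using inj by (simp add: distinct_map)
    show "set D \<subseteq> VA"
    proof
      fix z assume "z \<in> set D"
      then have "z = a \<or> (\<exists>l<m. z = snd (cs ! l))" unfolding D_def by auto
      then show "z \<in> VA"
      proof
        assume "z = a" then show ?thesis using aV by simp
      next
        assume "\<exists>l<m. z = snd (cs ! l)"
        then obtain l where l: "l < m" "z = snd (cs ! l)" by blast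
        have "l < n" using l(1) mle n3 by simp
        then show ?thesis using sndin[of l] l(2) by simp
      qed
    qed
    fix i assume i: "i < length D"
    show "EA (D ! i) (D ! ((i + 1) mod length D))"
    proof (cases "i = 0")
      case True
      have d1: "D ! 1 = snd (cs ! 0)" using Dnth[of 1] m2 by simp
      have "EA (snd (cs ! 0)) a"
        using nbr_a[OF A aV F_props(2)[OF G M F0] F_props(3)[OF G M F0]] .
      moreover have "simple_graph VA EA" using A unfolding cubic_def by blast
      ultimately have ea: "EA a (snd (cs ! 0))" unfolding simple_graph_def by blast
      have "(i + 1) mod length D = 1" using True lenD m2 by simp
      moreover have "D ! i = a" using True unfolding D_def by simp
      ultimately show ?thesis using d1 ea by simp
    next
      case False
      show ?thesis
      proof (cases "i = m")
        case True
        have "D ! ((i + 1) mod length D) = a" using True lenD unfolding D_def by simp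
        moreover have Di: "D ! i = snd (cs ! (m - 1))" using Dnth True m2 by simp
        moreover have "circ_edges EA F (cs ! (m - 1)) (cs ! m)"
          using Eg[of "m - 1"] mle m2 n3 by simp
        moreover have "fst (cs ! (m - 1)) \<noteq> fst (cs ! m)" using below[of "m - 1"] Pm m2
          unfolding P_def by simp
        ultimately have Fm: "F (cs ! (m - 1)) (cs ! m)" using diff by blast
        have "EA (snd (cs ! (m - 1))) a"
          using nbr_a[OF A aV F_props(2)[OF G M Fm] F_props(3)[OF G M Fm]] .
        then show ?thesis using \<open>D ! ((i + 1) mod length D) = a\<close> Di by simp
      next
        case False2: False
        then have im: "i < m" using i lenD by simp
        have "D ! i = snd (cs ! (i - 1))" "D ! ((i + 1) mod length D) = snd (cs ! i)"
        proof -
          show "D ! i = snd (cs ! (i - 1))" using Dnth[of i] im False by simp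
          have "(i + 1) mod length D = i + 1" using im lenD by simp
          then show "D ! ((i + 1) mod length D) = snd (cs ! i)" using Dnth[of "i+1"] im by simp
        qed
        moreover have "circ_edges EA F (cs ! (i - 1)) (cs ! i)"
          using Eg[of "i - 1"] False im mle n3 by simp
        moreover have "fst (cs ! (i - 1)) = fst (cs ! i)" using below[of "i - 1"] below[of i] im
          by simp
        ultimately show ?thesis using same by simp
      qed
    qed
  qed
  moreover have "length D \<le> length cs" using lenD mle n3 n_def by simp
  ultimately show ?thesis by blast
qed

lemma all_cycle:
  assumes G: "cubic VG EG" and A: "cubic VA EA" and aV: "a \<in> VA"
    and M: "circ_matching VG EG VA EA a F"
    and C: "is_cycle (VG \<times> (VA - {a})) (circ_edges EA F) cs"
  shows "\<exists>D. is_cycle VA EA D \<and> length D \<le> length cs"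
proof (cases "\<exists>i < length cs. fst (cs ! i) \<noteq> fst (cs ! ((i + 1) mod length cs))")
  case True
  then obtain i where i: "i < length cs" "fst (cs ! i) \<noteq> fst (cs ! ((i + 1) mod length cs))"
    by blast
  define n where "n = length cs"
  have n3: "n \<ge> 3" using C unfolding is_cycle_def n_def by auto
  define k where "k = (i + 1) mod n"
  have C': "is_cycle (VG \<times> (VA - {a})) (circ_edges EA F) (rotate k cs)"
    using rotate_cycle[OF C] .
  have "rotate k cs ! 0 = cs ! ((k + 0) mod n)" using nth_rotate[of 0 cs k] n3 unfolding n_def by (cases cs) auto
  also have "(k + 0) mod n = (i + 1) mod n" unfolding k_def by simp
  finally have r0: "rotate k cs ! 0 = cs ! ((i + 1) mod n)" .
  have "rotate k cs ! (n - 1) = cs ! ((k + (n - 1)) mod n)" using nth_rotate[of "n - 1" cs k] n3 unfolding n_def by (cases cs) auto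
  also have "(k + (n - 1)) mod n = i"
  proof -
    have "(k + (n - 1)) mod n = ((i + 1) + (n - 1)) mod n" unfolding k_def by (rule mod_add_left_eq)
    also have "(i + 1) + (n - 1) = i + n" using n3 by simp
    finally show ?thesis using i n_def by simp
  qed
  finally have "rotate k cs ! (n - 1) = cs ! i" .
  then have "fst (rotate k cs ! (length (rotate k cs) - 1)) \<noteq> fst (rotate k cs ! 0)"
    using r0 i n_def by simp
  from seg_cycle[OF G A aV M C' this] show ?thesis by simp
next
  case False
  define n where "n = length cs"
  have n3: "n \<ge> 3" using C unfolding is_cycle_def n_def by auto
  have st: "\<And>i. i < n \<Longrightarrow> fst (cs ! i) = fst (cs ! 0)"
  proof -
    fix i show "i < n \<Longrightarrow> fst (cs ! i) = fst (cs ! 0)"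
    proof (induction i)
      case 0 then show ?case by simp
    next
      case (Suc j)
      have all: "\<forall>i<n. fst (cs ! i) = fst (cs ! ((i + 1) mod n))" using False n_def by blast
      have jn: "j < n" using Suc.prems by simp
      have "(j + 1) mod n = Suc j" using Suc.prems by simp
      then have "fst (cs ! j) = fst (cs ! Suc j)" using all jn by metis
      then show ?case using Suc.IH jn by simp
    qed
  qed
  have E: "\<And>i. i < n \<Longrightarrow> circ_edges EA F (cs ! i) (cs ! ((i + 1) mod n))"
    using C unfolding is_cycle_def n_def by auto
  have dist: "distinct cs" using C unfolding is_cycle_def by auto
  have inj: "inj_on snd (set cs)"
  proof (rule inj_onI)
    fix p q assume p: "p \<in> set cs" and q: "q \<in> set cs" and pq: "snd p = snd q"
    obtain i1 where i1: "i1 < n" "p = cs ! i1" using p unfolding n_def in_set_conv_nth by blast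
    obtain i2 where i2: "i2 < n" "q = cs ! i2" using q unfolding n_def in_set_conv_nth by blast
    have "fst p = fst q" using st[OF i1(1)] st[OF i2(1)] i1(2) i2(2) by simp
    then show "p = q" using pq by (simp add: prod_eq_iff)
  qed
  have "is_cycle VA EA (map snd cs)" unfolding is_cycle_def
  proof (intro conjI allI impI)
    show "3 \<le> length (map snd cs)" using n3 n_def by simp
    show "distinct (map snd cs)" using dist inj by (simp add: distinct_map)
    show "set (map snd cs) \<subseteq> VA" using C unfolding is_cycle_def by auto
    fix i assume i: "i < length (map snd cs)"
    then have "circ_edges EA F (cs ! i) (cs ! ((i + 1) mod n))" using E n_def by simp
    moreover have "fst (cs ! i) = fst (cs ! ((i + 1) mod n))" proof -
      have "(i + 1) mod n < n" using n3 by simp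
      then show ?thesis using st[of i] st[of "(i + 1) mod n"] i n_def by simp
    qed
    ultimately have "EA (snd (cs ! i)) (snd (cs ! ((i + 1) mod n)))"
      using F_props(1)[OF G M] unfolding circ_edges_def by blast
    moreover have "(i + 1) mod n < n" using n3 by simp
    ultimately show "EA (map snd cs ! i) (map snd cs ! ((i + 1) mod length (map snd cs)))"
      using i n_def by simp
  qed
  then show ?thesis using n_def by (intro exI[of _ "map snd cs"]) simp
qed

theorem proposition5p17:
  fixes VG :: "'a set" and EG :: "'a \<Rightarrow> 'a \<Rightarrow> bool"
    and VA :: "'b set" and EA :: "'b \<Rightarrow> 'b \<Rightarrow> bool" and a :: 'b
    and F :: "'a \<times> 'b \<Rightarrow> 'a \<times> 'b \<Rightarrow> bool"
  assumes "cubic VG EG" and "cubic VA EA" and "a \<in> VA"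
    and "circ_matching VG EG VA EA a F"
  shows "girth VA EA \<le> girth (VG \<times> (VA - {a})) (circ_edges EA F)"
  unfolding girth_def
proof (rule INF_greatest)
  fix cs assume "cs \<in> {cs. is_cycle (VG \<times> (VA - {a})) (circ_edges EA F) cs}"
  then obtain D where D: "is_cycle VA EA D" "length D \<le> length cs"
    using all_cycle[OF assms] by blast
  have "(INF cs \<in> {cs. is_cycle VA EA cs}. enat (length cs)) \<le> enat (length D)"
    using D(1) by (intro INF_lower) simp
  also have "\<dots> \<le> enat (length cs)" using D(2) by simp
  finally show "(INF cs \<in> {cs. is_cycle VA EA cs}. enat (length cs)) \<le> enat (length cs)" .
qed

end
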